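(* Let $N=2^n$ with $n\geq10$, and let $K,\Delta>0$. Let $\tilde h_v=h_v+\Delta$ for $v\in\Lambda_N$. Then, for any realization of the field for which the ground states below are unique, the following two conditions cannot hold simultaneously: (a) $d_{\mathcal C_*^{\Lambda_N}}(\partial\Lambda_{N/4},\partial\Lambda_{N/2})\geq K$; (b) $|\mathcal C_*^{\Lambda_N}\cap\Lambda_{N/4}|\cdot\Delta>\frac{8}{K}|\mathcal C_*^{\Lambda_N}\cap\mathcal A_{N/2}|$.
   Context: Let $\{h_v:v\in\mathbb Z^2\}$ be real numbers (in the paper, i.i.d. centered Gaussians with variance $\epsilon^2$, for which all ground states are unique a.s.). Write $u\sim v$ if $|u-v|_1=1$; $\partial A=\{v\in\mathbb Z^2\setminus A:u\sim v\text{ for some }u\in A\}$; $\Lambda_r=\{v\in\mathbb Z^2:|v|_\infty\le r\}$; $\mathcal A_M=\Lambda_M\setminus\Lambda_{M/2}$, so $\mathcal A_{N/2}=\Lambda_{N/2}\setminus\Lambda_{N/4}$. For a field $g$ on $\Lambda_N$ and $\sigma\in\{-1,1\}^{\Lambda_N}$, $H^{\Lambda_N,\pm}_g(\sigma)=-\big(\sum_{u\sim v,\,u,v\in\Lambda_N}\sigma_u\sigma_v\pm\sum_{u\sim v,\,u\in\Lambda_N,v\in\partial\Lambda_N}\sigma_u+\sum_{u\in\Lambda_N}\sigma_ug_u\big)$, and the ground states $\sigma^{\Lambda_N,\pm}$ (for $g=h$) and $\tilde\sigma^{\Lambda_N,\pm}$ (for $g=\tilde h$) are the minimizers. $\mathcal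 C^{\Lambda_N}=\{v:\sigma^{\Lambda_N,+}_v=1,\sigma^{\Lambda_N,-}_v=-1\}$, $\tilde{\mathcal C}^{\Lambda_N}=\{v:\tilde\sigma^{\Lambda_N,+}_v=1,\tilde\sigma^{\Lambda_N,-}_v=-1\}$, and $\mathcal C_*^{\Lambda_N}=\mathcal C^{\Lambda_N}\cap\tilde{\mathcal C}^{\Lambda_N}$. $d_A$ is the graph distance on the subgraph induced on $A$, and $d_A(A_1,A_2)=\min_{x\in A_1\cap A,y\in A_2\cap A}d_A(x,y)$ with $\min\emptyset=\infty$. *)

theory Defs
  imports "HOL-Library.Extended_Real"
begin

type_synonym site = "int \<times> int"

definition adj :: "site \<Rightarrow> site \<Rightarrow> bool" where
  "adj u v \<longleftrightarrow> \<bar>fst u - fst v\<bar> + \<bar>snd u - snd v\<bar> = 1"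

definition bdry :: "site set \<Rightarrow> site set" where
  "bdry A = {v. v \<notin> A \<and> (\<exists>u\<in>A. adj u v)}"

definition box :: "int \<Rightarrow> site set" where
  "box r = {v. \<bar>fst v\<bar> \<le> r \<and> \<bar>snd v\<bar> \<le> r}"

definition configs :: "site set \<Rightarrow> (site \<Rightarrow> real) set" where
  "configs A = {\<sigma>. (\<forall>v\<in>A. \<sigma> v = 1 \<or> \<sigma> v = -1) \<and> (\<forall>v. v \<notin> A \<longrightarrow> \<sigma> v = 0)}"

text \<open>Hamiltonian with boundary condition s (s = 1 for plus, s = -1 for minus) and field g.
  The nearest-neighbour sum runs over unordered edges {u,v}: the sum over ordered
  pairs is halved.\<close>
definition hamiltonian :: "site set \<Rightarrow> (site \<Rightarrow> real) \<Rightarrow> real \<Rightarrow> (site \<Rightarrow> real) \<Rightarrow> real" where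
  "hamiltonian A g s \<sigma> =
     - ( (1/2) * (\<Sum>(u,v)\<in>{(u,v). u \<in> A \<and> v \<in> A \<and> adj u v}. \<sigma> u * \<sigma> v)
       + s * (\<Sum>(u,v)\<in>{(u,v). u \<in> A \<and> v \<in> bdry A \<and> adj u v}. \<sigma> u)
       + (\<Sum>u\<in>A. \<sigma> u * g u))"

definition unique_ground_state :: "site set \<Rightarrow> (site \<Rightarrow> real) \<Rightarrow> real \<Rightarrow> (site \<Rightarrow> real) \<Rightarrow> bool" where
  "unique_ground_state A g s \<sigma> \<longleftrightarrow>
     \<sigma> \<in> configs A \<and>
     (\<forall>\<tau>\<in>configs A. \<tau> \<noteq> \<sigma> \<longrightarrow> hamiltonian A g s \<sigma> < hamiltonian A g s \<tau>)"

definition walk_in :: "site set \<Rightarrow> site \<Rightarrow> site \<Rightarrow> nat \<Rightarrow> bool" where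
  "walk_in A x y k \<longleftrightarrow> (\<exists>p::nat \<Rightarrow> site. p 0 = x \<and> p k = y \<and> (\<forall>i\<le>k. p i \<in> A)
        \<and> (\<forall>i<k. adj (p i) (p (Suc i))))"

definition graph_dist :: "site set \<Rightarrow> site \<Rightarrow> site \<Rightarrow> enat" where
  "graph_dist A x y = Inf {enat k | k. walk_in A x y k}"

definition set_graph_dist :: "site set \<Rightarrow> site set \<Rightarrow> site set \<Rightarrow> enat" where
  "set_graph_dist A A1 A2 = (INF x\<in>A1 \<inter> A. INF y\<in>A2 \<inter> A. graph_dist A x y)"

definition disagree :: "(site \<Rightarrow> real) \<Rightarrow> (site \<Rightarrow> real) \<Rightarrow> site set" where
  "disagree sp sm = {v. sp v = 1 \<and> sm v = -1}"

end

theory Submission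
  imports Defs
begin


lemma configs_val: "\<sigma> \<in> configs A \<Longrightarrow> v \<in> A \<Longrightarrow> \<sigma> v = 1 \<or> \<sigma> v = -1"
  by (auto simp: configs_def)
lemma configs_out: "\<sigma> \<in> configs A \<Longrightarrow> v \<notin> A \<Longrightarrow> \<sigma> v = 0"
  unfolding configs_def by blast

lemma configs_intro:
  assumes "\<And>v. v \<in> A \<Longrightarrow> \<sigma> v = 1 \<or> \<sigma> v = -1" "\<And>v. v \<notin> A \<Longrightarrow> \<sigma> v = 0"
  shows "\<sigma> \<in> configs A"
  using assms unfolding configs_def by blast

lemma ham_mono_ineq:
  assumes fin: "finite A" and \<sigma>: "\<sigma> \<in> configs A" and \<tau>: "\<tau> \<in> configs A"
    and gg: "\<forall>v\<in>A. g v \<le> g' v"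
  shows "hamiltonian A g s (\<lambda>v. min (\<sigma> v) (\<tau> v)) + hamiltonian A g' s (\<lambda>v. max (\<sigma> v) (\<tau> v))
       \<le> hamiltonian A g s \<sigma> + hamiltonian A g' s \<tau>"
proof -
  define P where "P = {(u,v). u \<in> A \<and> v \<in> A \<and> adj u v}"
  define Q where "Q = {(u,v). u \<in> A \<and> v \<in> bdry A \<and> adj u v}"
  have e: "(\<Sum>(u,v)\<in>P. \<sigma> u * \<sigma> v) + (\<Sum>(u,v)\<in>P. \<tau> u * \<tau> v)
     \<le> (\<Sum>(u,v)\<in>P. min (\<sigma> u) (\<tau> u) * min (\<sigma> v) (\<tau> v)) + (\<Sum>(u,v)\<in>P. max (\<sigma> u) (\<tau> u) * max (\<sigma> v) (\<tau> v))"
    unfolding sum.distrib[symmetric]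
    apply (rule sum_mono)
    subgoal premises prems for x
    proof -
      obtain u v where Pair: "x = (u,v)" by (cases x)
      with prems have x: "u \<in> A" "v \<in> A" by (auto simp: P_def)
      show ?thesis
      using configs_val[OF \<sigma> x(1)] configs_val[OF \<sigma> x(2)] configs_val[OF \<tau> x(1)] configs_val[OF \<tau> x(2)]
      unfolding Pair by (elim disjE) simp_all
    qed
    done
  have b: "(\<Sum>(u,v)\<in>Q. min (\<sigma> u) (\<tau> u)) + (\<Sum>(u,v)\<in>Q. max (\<sigma> u) (\<tau> u)) = (\<Sum>(u,v)\<in>Q. \<sigma> u) + (\<Sum>(u,v)\<in>Q. \<tau> u)"
  proof -
    have "(\<Sum>x\<in>Q. (\<lambda>(u,v). min (\<sigma> u) (\<tau> u)) x + (\<lambda>(u,v). max (\<sigma> u) (\<tau> u)) x)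
       = (\<Sum>x\<in>Q. (\<lambda>(u,v). \<sigma> u) x + (\<lambda>(u,v). \<tau> u) x)"
      by (rule sum.cong) (auto simp: split_beta)
    then show ?thesis by (simp only: sum.distrib)
  qed
  have f: "(\<Sum>u\<in>A. \<sigma> u * g u) + (\<Sum>u\<in>A. \<tau> u * g' u) \<le> (\<Sum>u\<in>A. min (\<sigma> u) (\<tau> u) * g u) + (\<Sum>u\<in>A. max (\<sigma> u) (\<tau> u) * g' u)"
    unfolding sum.distrib[symmetric]
  proof (rule sum_mono)
    fix u assume u: "u \<in> A"
    have "g u \<le> g' u" using gg u by auto
    then show "\<sigma> u * g u + \<tau> u * g' u \<le> min (\<sigma> u) (\<tau> u) * g u + max (\<sigma> u) (\<tau> u) * g' u"
      using configs_val[OF \<sigma> u] configs_val[OF \<tau> u] by (elim disjE) simp_all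
  qed
  have bs: "s * (\<Sum>(u,v)\<in>Q. min (\<sigma> u) (\<tau> u)) + s * (\<Sum>(u,v)\<in>Q. max (\<sigma> u) (\<tau> u)) = s * (\<Sum>(u,v)\<in>Q. \<sigma> u) + s * (\<Sum>(u,v)\<in>Q. \<tau> u)"
    by (simp only: distrib_left[symmetric] b)
  show ?thesis unfolding hamiltonian_def P_def[symmetric] Q_def[symmetric]
    using e f bs by linarith
qed

lemma gs_mono:
  assumes fin: "finite A" and gs1: "unique_ground_state A g s \<sigma>" and gs2: "unique_ground_state A g' s \<tau>"
    and gg: "\<forall>v\<in>A. g v \<le> g' v"
  shows "\<sigma> v \<le> \<tau> v"
proof -
  have \<sigma>: "\<sigma> \<in> configs A" and \<tau>: "\<tau> \<in> configs A" using gs1 gs2 by (auto simp: unique_ground_state_def)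
  let ?m = "\<lambda>v. min (\<sigma> v) (\<tau> v)" and ?M = "\<lambda>v. max (\<sigma> v) (\<tau> v)"
  have m: "?m \<in> configs A"
  proof (rule configs_intro)
    fix v assume vA: "v \<in> A" show "?m v = 1 \<or> ?m v = -1"
      using configs_val[OF \<sigma> vA] configs_val[OF \<tau> vA] by (elim disjE) simp_all
  next
    fix v assume "v \<notin> A" then show "?m v = 0" using configs_out[OF \<sigma>, of v] configs_out[OF \<tau>, of v] by simp
  qed
  have M: "?M \<in> configs A"
  proof (rule configs_intro)
    fix v assume vA: "v \<in> A" show "?M v = 1 \<or> ?M v = -1"
      using configs_val[OF \<sigma> vA] configs_val[OF \<tau> vA] by (elim disjE) simp_all
  next
    fix v assume "v \<notin> A" then show "?M v = 0" using configs_out[OF \<sigma>, of v] configs_out[OF \<tau>, of v] by simp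
  qed
  note ineq = ham_mono_ineq[OF fin \<sigma> \<tau> gg, of s]
  have "hamiltonian A g' s \<tau> \<le> hamiltonian A g' s ?M"
  proof (cases "?M = \<tau>")
    case True then show ?thesis by simp
  next
    case False then show ?thesis using gs2 M unfolding unique_ground_state_def by (meson less_imp_le)
  qed
  then have "\<not> hamiltonian A g s \<sigma> < hamiltonian A g s ?m" using ineq by linarith
  then have "?m = \<sigma>" using gs1 m unfolding unique_ground_state_def by blast
  then have "min (\<sigma> v) (\<tau> v) = \<sigma> v" by metis
  then show ?thesis by linarith
qed



lemma ham_alt: "hamiltonian A g s \<sigma> =
  - ((1/2) * (\<Sum>x\<in>{(u,v). u \<in> A \<and> v \<in> A \<and> adj u v}. \<sigma> (fst x) * \<sigma> (snd x))
     + s * (\<Sum>x\<in>{(u,v). u \<in> A \<and> v \<in> bdry A \<and> adj u v}. \<sigma> (fst x))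
     + (\<Sum>u\<in>A. \<sigma> u * g u))"
  unfolding hamiltonian_def by (simp add: split_beta)

lemma swap_bound:
  assumes fin: "finite A"
    and ga: "unique_ground_state A g' (-1) a" and gb: "unique_ground_state A g 1 b"
    and gg: "\<forall>v\<in>A. g' v = g v + \<Delta>"
    and SA: "S \<subseteq> A" and Sv: "\<forall>u\<in>S. b u = 1 \<and> a u = -1"
    and Sn: "\<forall>u\<in>S. \<forall>v. adj u v \<longrightarrow> v \<in> A"
  shows "\<Delta> * real (card S) \<le>
     real (card {(u,v). u \<in> A \<and> v \<in> A \<and> adj u v \<and> u \<in> S \<and> v \<notin> S \<and> b v = 1 \<and> a v = -1})
   + real (card {(u,v). u \<in> A \<and> v \<in> A \<and> adj u v \<and> v \<in> S \<and> u \<notin> S \<and> b u = 1 \<and> a u = -1})"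
proof -
  define P where "P = {(u,v). u \<in> A \<and> v \<in> A \<and> adj u v}"
  define Q where "Q = {(u,v). u \<in> A \<and> v \<in> bdry A \<and> adj u v}"
  define E1 where "E1 = {(u,v). u \<in> A \<and> v \<in> A \<and> adj u v \<and> u \<in> S \<and> v \<notin> S \<and> b v = 1 \<and> a v = -1}"
  define E2 where "E2 = {(u,v). u \<in> A \<and> v \<in> A \<and> adj u v \<and> v \<in> S \<and> u \<notin> S \<and> b u = 1 \<and> a u = -1}"
  define s1 where "s1 = (\<lambda>v. if v \<in> S then b v else a v)"
  define s2 where "s2 = (\<lambda>v. if v \<in> S then a v else b v)"
  have a: "a \<in> configs A" using ga by (simp add: unique_ground_state_def)
  have b: "b \<in> configs A" using gb by (simp add: unique_ground_state_def)
  have s1c: "s1 \<in> configs A"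
  proof (rule configs_intro)
    fix v assume vA: "v \<in> A" show "s1 v = 1 \<or> s1 v = -1"
      using configs_val[OF a vA] configs_val[OF b vA] by (simp add: s1_def)
  next
    fix v assume "v \<notin> A" then show "s1 v = 0" using configs_out[OF a, of v] configs_out[OF b, of v] SA
      by (auto simp: s1_def)
  qed
  have s2c: "s2 \<in> configs A"
  proof (rule configs_intro)
    fix v assume vA: "v \<in> A" show "s2 v = 1 \<or> s2 v = -1"
      using configs_val[OF a vA] configs_val[OF b vA] by (simp add: s2_def)
  next
    fix v assume "v \<notin> A" then show "s2 v = 0" using configs_out[OF a, of v] configs_out[OF b, of v] SA
      by (auto simp: s2_def)
  qed
  have h1: "hamiltonian A g' (-1) a \<le> hamiltonian A g' (-1) s1"
  proof (cases "s1 = a")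
    case True then show ?thesis by simp
  next
    case False then show ?thesis using ga s1c unfolding unique_ground_state_def by (meson less_imp_le)
  qed
  have h2: "hamiltonian A g 1 b \<le> hamiltonian A g 1 s2"
  proof (cases "s2 = b")
    case True then show ?thesis by simp
  next
    case False then show ?thesis using gb s2c unfolding unique_ground_state_def by (meson less_imp_le)
  qed
  have finP: "finite P" by (rule finite_subset[of _ "A \<times> A"]) (auto simp: P_def fin)
  have E1P: "E1 \<subseteq> P" and E2P: "E2 \<subseteq> P" by (auto simp: E1_def E2_def P_def)
  define F where "F = (\<lambda>x. s1 (fst x) * s1 (snd x) + s2 (fst x) * s2 (snd x)
      - a (fst x) * a (snd x) - b (fst x) * b (snd x)
      + 4 * of_bool (x \<in> E1) + 4 * (of_bool (x \<in> E2) :: real))"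
  have Fnn: "0 \<le> F x" if xP: "x \<in> P" for x
  proof -
    obtain u v where x: "x = (u,v)" by (cases x)
    with xP have uA: "u \<in> A" and vA: "v \<in> A" and adj: "adj u v" by (auto simp: P_def)
    show ?thesis
    proof (cases "u \<in> S")
      case uS: True
      show ?thesis
      proof (cases "v \<in> S")
        case True then show ?thesis using uS by (simp add: F_def x s1_def s2_def)
      next
        case vS: False
        have "b u = 1" "a u = -1" using Sv uS by auto
        then show ?thesis using vS uS configs_val[OF a vA] configs_val[OF b vA] uA vA adj
          by (auto simp: F_def x s1_def s2_def E1_def E2_def)
      qed
    next
      case uS: False
      show ?thesis
      proof (cases "v \<in> S")
        case vS: True
        have "b v = 1" "a v = -1" using Sv vS by auto
        then show ?thesis using vS uS configs_val[OF a uA] configs_val[OF b uA] uA vA adj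
          by (auto simp: F_def x s1_def s2_def E1_def E2_def)
      next
        case False then show ?thesis using uS by (simp add: F_def x s1_def s2_def)
      qed
    qed
  qed
  have "0 \<le> sum F P" by (rule sum_nonneg) (rule Fnn)
  moreover have "sum F P = (\<Sum>x\<in>P. s1 (fst x) * s1 (snd x)) + (\<Sum>x\<in>P. s2 (fst x) * s2 (snd x))
      - (\<Sum>x\<in>P. a (fst x) * a (snd x)) - (\<Sum>x\<in>P. b (fst x) * b (snd x))
      + 4 * real (card E1) + 4 * real (card E2)"
  proof -
    have c1: "(\<Sum>x\<in>P. (of_bool (x \<in> E1) :: real)) = real (card E1)"
      proof -
      have e: "P \<inter> {x. x \<in> E1} = E1" using E1P by blast
      have "(\<Sum>x\<in>P. (of_bool (x \<in> E1) :: real)) = of_nat (card (P \<inter> {x. x \<in> E1}))" by (rule sum_of_bool_eq) (fact finP)+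
      then show ?thesis by (simp only: e)
    qed
    have c2: "(\<Sum>x\<in>P. (of_bool (x \<in> E2) :: real)) = real (card E2)"
      proof -
      have e: "P \<inter> {x. x \<in> E2} = E2" using E2P by blast
      have "(\<Sum>x\<in>P. (of_bool (x \<in> E2) :: real)) = of_nat (card (P \<inter> {x. x \<in> E2}))" by (rule sum_of_bool_eq) (fact finP)+
      then show ?thesis by (simp only: e)
    qed
    show ?thesis unfolding F_def
      by (simp only: sum.distrib sum_subtractf sum_distrib_left[symmetric] c1 c2)
  qed
  ultimately have edge: "(\<Sum>x\<in>P. a (fst x) * a (snd x)) + (\<Sum>x\<in>P. b (fst x) * b (snd x))
      \<le> (\<Sum>x\<in>P. s1 (fst x) * s1 (snd x)) + (\<Sum>x\<in>P. s2 (fst x) * s2 (snd x)) + 4 * real (card E1) + 4 * real (card E2)"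
    by linarith
  have q1: "(\<Sum>x\<in>Q. s1 (fst x)) = (\<Sum>x\<in>Q. a (fst x))"
  proof (rule sum.cong[OF refl])
    fix x assume "x \<in> Q"
    then have "fst x \<notin> S" using Sn by (auto simp: Q_def bdry_def)
    then show "s1 (fst x) = a (fst x)" by (simp add: s1_def)
  qed
  have q2: "(\<Sum>x\<in>Q. s2 (fst x)) = (\<Sum>x\<in>Q. b (fst x))"
  proof (rule sum.cong[OF refl])
    fix x assume "x \<in> Q"
    then have "fst x \<notin> S" using Sn by (auto simp: Q_def bdry_def)
    then show "s2 (fst x) = b (fst x)" by (simp add: s2_def)
  qed
  have fld: "(\<Sum>u\<in>A. s1 u * g' u) + (\<Sum>u\<in>A. s2 u * g u) = (\<Sum>u\<in>A. a u * g' u) + (\<Sum>u\<in>A. b u * g u) + 2 * \<Delta> * real (card S)"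
  proof -
    have "(\<Sum>u\<in>A. s1 u * g' u + s2 u * g u) = (\<Sum>u\<in>A. a u * g' u + b u * g u + 2 * \<Delta> * of_bool (u \<in> S))"
    proof (rule sum.cong[OF refl])
      fix u assume uA: "u \<in> A"
      show "s1 u * g' u + s2 u * g u = a u * g' u + b u * g u + 2 * \<Delta> * of_bool (u \<in> S)"
        using gg uA Sv by (cases "u \<in> S") (auto simp: s1_def s2_def algebra_simps)
    qed
    moreover have "(\<Sum>u\<in>A. (of_bool (u \<in> S) :: real)) = real (card S)"
      proof -
      have e: "A \<inter> {x. x \<in> S} = S" using SA by blast
      have "(\<Sum>x\<in>A. (of_bool (x \<in> S) :: real)) = of_nat (card (A \<inter> {x. x \<in> S}))" by (rule sum_of_bool_eq) (fact fin)+
      then show ?thesis by (simp only: e)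
    qed
    ultimately show ?thesis by (simp only: sum.distrib sum_distrib_left[symmetric])
  qed
  have "hamiltonian A g' (-1) a + hamiltonian A g 1 b \<le> hamiltonian A g' (-1) s1 + hamiltonian A g 1 s2"
    using h1 h2 by linarith
  then have "2 * \<Delta> * real (card S) \<le> 2 * real (card E1) + 2 * real (card E2)"
    unfolding ham_alt P_def[symmetric] Q_def[symmetric] using edge q1 q2 fld by linarith
  then show ?thesis unfolding E1_def E2_def by linarith
qed



lemma adj_sym: "adj u v \<Longrightarrow> adj v u"
  unfolding adj_def by (simp add: abs_minus_commute)

lemma adj_box: "u \<in> box r \<Longrightarrow> adj u v \<Longrightarrow> v \<in> box (r+1)"
  unfolding adj_def box_def by auto

lemma box_mono: "r \<le> r' \<Longrightarrow> box r \<subseteq> box r'"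
  unfolding box_def by auto

lemma finite_box: "finite (box r)"
proof -
  have "box r = {-r..r} \<times> {-r..r}" unfolding box_def by auto
  then show ?thesis by simp
qed

lemma bdry_box: "bdry (box r) \<subseteq> box (r+1)"
  unfolding bdry_def using adj_box by blast

definition D4 :: "site set" where "D4 = {(1,0),(-1,0),(0,1),(0,-1)}"

lemma adj_D4: "adj u v \<Longrightarrow> (fst v - fst u, snd v - snd u) \<in> D4"
  unfolding adj_def D4_def by (auto simp: abs_if split: if_splits)

lemma finite_D4x: "finite D4" unfolding D4_def by simp

lemma card_D4: "card D4 = 4" unfolding D4_def by simp

lemma card_nb1:
  assumes "finite R" and XS: "X \<subseteq> {(u,v). u \<in> R \<and> adj u v}"
  shows "card X \<le> 4 * card R"
proof -
  have "{(u,v). u \<in> R \<and> adj u v} \<subseteq> (\<lambda>(u,d). (u, (fst u + fst d, snd u + snd d))) ` (R \<times> D4)"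
  proof
    fix x assume "x \<in> {(u,v). u \<in> R \<and> adj u v}"
    then obtain u v where x: "x = (u,v)" "u \<in> R" "adj u v" by auto
    have "(u, (fst v - fst u, snd v - snd u)) \<in> R \<times> D4" using x adj_D4 by auto
    moreover have "x = (\<lambda>(u,d). (u, (fst u + fst d, snd u + snd d))) (u, (fst v - fst u, snd v - snd u))"
      using x by (simp add: prod_eq_iff)
    ultimately show "x \<in> (\<lambda>(u,d). (u, (fst u + fst d, snd u + snd d))) ` (R \<times> D4)" by blast
  qed
  then have "card X \<le> card (R \<times> D4)" using XS
    by (meson assms(1) card_image_le card_mono finite_D4x finite_SigmaI finite_imageI order_trans)
  then show ?thesis by (simp add: card_cartesian_product card_D4)
qed


lemma card_nb2:
  assumes "finite R" and XS: "X \<subseteq> {(u,v). v \<in> R \<and> adj u v}"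
  shows "card X \<le> 4 * card R"
proof -
  have "{(u,v). v \<in> R \<and> adj u v} \<subseteq> (\<lambda>(v,d). ((fst v + fst d, snd v + snd d), v)) ` (R \<times> D4)"
  proof
    fix x assume "x \<in> {(u,v). v \<in> R \<and> adj u v}"
    then obtain u v where x: "x = (u,v)" "v \<in> R" "adj v u" by (auto dest: adj_sym)
    have "(v, (fst u - fst v, snd u - snd v)) \<in> R \<times> D4" using x adj_D4 by auto
    moreover have "x = (\<lambda>(v,d). ((fst v + fst d, snd v + snd d), v)) (v, (fst u - fst v, snd u - snd v))"
      using x by (simp add: prod_eq_iff)
    ultimately show "x \<in> (\<lambda>(v,d). ((fst v + fst d, snd v + snd d), v)) ` (R \<times> D4)" by blast
  qed
  then have "card X \<le> card (R \<times> D4)" using XS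
    by (meson assms(1) card_image_le card_mono finite_D4x finite_SigmaI finite_imageI order_trans)
  then show ?thesis by (simp add: card_cartesian_product card_D4)
qed

lemma walk_mem: "walk_in C x y k \<Longrightarrow> x \<in> C \<and> y \<in> C"
  unfolding walk_in_def by (metis le0 order_refl)

lemma walk_zero: "x \<in> C \<Longrightarrow> walk_in C x x 0"
  unfolding walk_in_def by (rule exI[of _ "\<lambda>_. x"]) auto

lemma walk_snoc:
  assumes "walk_in C x u j" "adj u v" "v \<in> C"
  shows "walk_in C x v (Suc j)"
proof -
  obtain p where p: "p 0 = x" "p j = u" "\<forall>i\<le>j. p i \<in> C" "\<forall>i<j. adj (p i) (p (Suc i))"
    using assms(1) unfolding walk_in_def by blast
  define p' where "p' = p(Suc j := v)"
  have "p' 0 = x" "p' (Suc j) = v" using p by (auto simp: p'_def)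
  moreover have "\<forall>i\<le>Suc j. p' i \<in> C" using p assms(3) by (auto simp: p'_def le_Suc_eq)
  moreover have "\<forall>i<Suc j. adj (p' i) (p' (Suc i))"
    using p assms(2) by (auto simp: p'_def less_Suc_eq)
  ultimately show ?thesis unfolding walk_in_def by blast
qed

lemma walk_exit:
  assumes "walk_in C x u j" "x \<in> B" "u \<notin> B"
  shows "\<exists>i\<le>j. \<exists>y. y \<in> bdry B \<and> walk_in C x y i"
proof -
  obtain p where p: "p 0 = x" "p j = u" "\<forall>i\<le>j. p i \<in> C" "\<forall>i<j. adj (p i) (p (Suc i))"
    using assms(1) unfolding walk_in_def by blast
  define i where "i = (LEAST i. p i \<notin> B)"
  have pi: "p i \<notin> B" unfolding i_def by (rule LeastI[of _ j]) (use p assms in simp)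
  have ij: "i \<le> j" unfolding i_def by (rule Least_le) (use p assms in simp)
  have i0: "i \<noteq> 0"
  proof
    assume "i = 0" then have "p 0 \<notin> B" using pi by simp
    then show False using p(1) assms(2) by simp
  qed
  then obtain i' where i': "i = Suc i'" by (cases i) auto
  have "p i' \<in> B" using not_less_Least[of i' "\<lambda>i. p i \<notin> B"] i' unfolding i_def by auto
  moreover have "adj (p i') (p i)" using p ij i' by auto
  ultimately have "p i \<in> bdry B" using pi unfolding bdry_def by blast
  moreover have "walk_in C x (p i) i" unfolding walk_in_def
    by (rule exI[of _ p]) (use p ij in auto)
  ultimately show ?thesis using ij by blast
qed

lemma dist_le:
  assumes "x \<in> X" "x \<in> C" "y \<in> Y" "y \<in> C" "walk_in C x y i"
  shows "set_graph_dist C X Y \<le> enat i"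
proof -
  have "graph_dist C x y \<le> enat i" unfolding graph_dist_def
    by (rule Inf_lower) (use assms(5) in blast)
  then show ?thesis unfolding set_graph_dist_def
    by (meson INF_lower2 IntI assms(1-4))
qed



theorem lemma2p4:
  fixes n :: nat and N :: int and K \<Delta> :: real
    and h :: "site \<Rightarrow> real"
    and sp sm tp tm :: "site \<Rightarrow> real"
  assumes "n \<ge> 10" and "N = 2 ^ n" and "K > 0" and "\<Delta> > 0"
    and "unique_ground_state (box N) h 1 sp"
    and "unique_ground_state (box N) h (-1) sm"
    and "unique_ground_state (box N) (\<lambda>v. h v + \<Delta>) 1 tp"
    and "unique_ground_state (box N) (\<lambda>v. h v + \<Delta>) (-1) tm"
  shows "\<not> ( ereal K \<le> ereal_of_enat
               (set_graph_dist (disagree sp sm \<inter> disagree tp tm)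
                  (bdry (box (N div 4))) (bdry (box (N div 2))))
           \<and> real (card (disagree sp sm \<inter> disagree tp tm \<inter> box (N div 4))) * \<Delta>
               > 8 / K * real (card (disagree sp sm \<inter> disagree tp tm
                                     \<inter> (box (N div 2) - box (N div 4)))) )"
proof
  note gsp = assms(5) and gsm = assms(6) and gtp = assms(7) and gtm = assms(8)
  define C where "C = disagree sp sm \<inter> disagree tp tm"
  define q where "q = N div 4"
  define r where "r = N div 2"
  define A where "A = box N"
  assume H: "ereal K \<le> ereal_of_enat (set_graph_dist (disagree sp sm \<inter> disagree tp tm)
                  (bdry (box (N div 4))) (bdry (box (N div 2))))
           \<and> real (card (disagree sp sm \<inter> disagree tp tm \<inter> box (N div 4))) * \<Delta>
               > 8 / K * real (card (disagree sp sm \<inter> disagree tp tm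
                                     \<inter> (box (N div 2) - box (N div 4))))"
  then have Hd: "ereal K \<le> ereal_of_enat (set_graph_dist C (bdry (box q)) (bdry (box r)))"
    and Hb: "real (card (C \<inter> box q)) * \<Delta> > 8 / K * real (card (C \<inter> (box r - box q)))"
    unfolding C_def q_def r_def by auto
  obtain k0 where k0: "N = 4 * 2 ^ k0"
  proof
    have "n = (n - 2) + 2" using assms(1) by simp
    then have "(2::int) ^ n = 2 ^ (n - 2) * 2 ^ 2" by (metis power_add)
    then show "N = 4 * 2 ^ (n - 2)" using assms(2) by simp
  qed
  have q1: "q \<ge> 1" and rq: "r = 2 * q" and rN: "r + 1 \<le> N" and qr: "q + 1 \<le> r"
  proof -
    have p: "(2::int) ^ k0 \<ge> 1" by simp
    have qe: "q = 2 ^ k0" unfolding q_def k0 by simp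
    have re: "r = 2 * 2 ^ k0" unfolding r_def k0 by simp
    show "q \<ge> 1" using qe p by linarith
    show "r = 2 * q" using qe re by simp
    show "r + 1 \<le> N" using re k0 p by linarith
    show "q + 1 \<le> r" using qe re p by linarith
  qed
  have finA: "finite A" unfolding A_def by (rule finite_box)
  have gg: "\<forall>v\<in>box N. h v \<le> h v + \<Delta>" using assms(4) by auto
  have mono_p: "sp v \<le> tp v" for v by (rule gs_mono[OF finite_box gsp gtp gg])
  have mono_m: "sm v \<le> tm v" for v by (rule gs_mono[OF finite_box gsm gtm gg])
  have cfg: "sp \<in> configs A" "sm \<in> configs A" "tp \<in> configs A" "tm \<in> configs A"
    using gsp gsm gtp gtm by (auto simp: unique_ground_state_def A_def)
  have CA: "C \<subseteq> A"
  proof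
    fix v assume "v \<in> C" then have "sp v = 1" by (simp add: C_def disagree_def)
    then show "v \<in> A" using configs_out[OF cfg(1), of v] by (cases "v \<in> A") auto
  qed
  have finC: "finite C" using CA finA finite_subset by blast
  have DC: "v \<in> C" if "v \<in> A" "sp v = 1" "tm v = -1" for v
  proof -
    have "tp v = 1" using mono_p[of v] configs_val[OF cfg(3) that(1)] that by auto
    moreover have "sm v = -1" using mono_m[of v] configs_val[OF cfg(2) that(1)] that by auto
    ultimately show ?thesis using that by (simp add: C_def disagree_def)
  qed
  have Cv: "sp v = 1 \<and> tm v = -1" if "v \<in> C" for v using that by (simp add: C_def disagree_def)
  define X where "X = bdry (box q)"
  define Y where "Y = bdry (box r)"
  have distK: "K \<le> real i" if "x \<in> X" "x \<in> C" "y \<in> Y" "y \<in> C" "walk_in C x y i" for x y i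
  proof -
    have "set_graph_dist C X Y \<le> enat i" by (rule dist_le[OF that])
    then have "ereal_of_enat (set_graph_dist C X Y) \<le> ereal_of_enat (enat i)"
      by (simp only: ereal_of_enat_le_iff)
    then have "ereal K \<le> ereal (real i)" using Hd unfolding X_def Y_def
      by (metis (no_types) order_trans ereal_of_enat_simps(1))
    then show ?thesis by simp
  qed
  define W where "W = (\<lambda>k. {v. \<exists>x\<in>X \<inter> C. \<exists>j\<le>k. walk_in C x v j})"
  define S where "S = (\<lambda>k. (C \<inter> box q) \<union> W k)"
  define R where "R = (\<lambda>k. {u. u \<in> W k \<and> u \<notin> box q \<and> (\<forall>k'<k. u \<notin> W k')})"
  define m where "m = nat \<lceil>K\<rceil>"
  have WC: "W k \<subseteq> C" for k unfolding W_def using walk_mem by blast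
  have SC: "S k \<subseteq> C" for k using WC unfolding S_def by blast
  have RW: "R k \<subseteq> W k" for k unfolding R_def by blast
  have XA: "X \<subseteq> box r" unfolding X_def using bdry_box box_mono qr by blast
  have km: "real k < K" if "k < m" for k
  proof -
    have "int k < \<lceil>K\<rceil>" using that assms(3) unfolding m_def by linarith
    then show ?thesis using less_ceiling_iff by (metis of_int_of_nat_eq)
  qed
  have Sbox: "S k \<subseteq> box r" if "k < m" for k
  proof
    fix u assume "u \<in> S k"
    then consider "u \<in> box q" | "u \<in> W k" unfolding S_def by blast
    then show "u \<in> box r"
    proof cases
      case 1 moreover have "box q \<subseteq> box r" using qr by (intro box_mono) linarith
      ultimately show ?thesis by blast
    next
      case 2
      then obtain x j where x: "x \<in> X" "x \<in> C" "j \<le> k" "walk_in C x u j" unfolding W_def by blast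
      show ?thesis
      proof (rule ccontr)
        assume "u \<notin> box r"
        then obtain i y where "i \<le> j" "y \<in> bdry (box r)" "walk_in C x y i"
          using walk_exit[OF x(4)] XA x(1) by blast
        then have "K \<le> real i" using distK[OF x(1,2)] walk_mem unfolding Y_def by blast
        then show False using km[OF that] \<open>i \<le> j\<close> \<open>j \<le> k\<close> by linarith
      qed
    qed
  qed
  have bnd: "w \<in> R k" if "w \<in> S k" "z \<notin> S k" "z \<in> C" "adj w z" for w z k
  proof -
    have wq: "w \<notin> box q"
    proof
      assume wq: "w \<in> box q"
      show False
      proof (cases "z \<in> box q")
        case True then show False using that unfolding S_def by blast
      next
        case False
        then have "z \<in> X" unfolding X_def bdry_def using wq that(4) by blast
        then have "z \<in> W k" unfolding W_def using walk_zero[OF that(3)] that(3) by blast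
        then show False using that unfolding S_def by blast
      qed
    qed
    then have wW: "w \<in> W k" using that unfolding S_def by blast
    have "w \<notin> W k'" if "k' < k" for k'
    proof
      assume "w \<in> W k'"
      then obtain x j where x: "x \<in> X \<inter> C" "j \<le> k'" "walk_in C x w j" unfolding W_def by blast
      have "walk_in C x z (Suc j)" by (rule walk_snoc[OF x(3)]) (use \<open>adj w z\<close> \<open>z \<in> C\<close> in auto)
      then have "z \<in> W k" unfolding W_def using x(1,2) \<open>k' < k\<close> by (auto intro!: bexI[of _ x] exI[of _ "Suc j"])
      then show False using \<open>z \<notin> S k\<close> unfolding S_def by blast
    qed
    then show ?thesis using wq wW unfolding R_def by blast
  qed
  have step: "\<Delta> * real (card (C \<inter> box q)) \<le> 8 * real (card (R k))" if "k < m" for k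
  proof -
    have SA: "S k \<subseteq> A" using SC CA by blast
    have Sv: "\<forall>u\<in>S k. sp u = 1 \<and> tm u = -1" using SC Cv by blast
    have Sn: "\<forall>u\<in>S k. \<forall>v. adj u v \<longrightarrow> v \<in> A"
    proof (intro ballI allI impI)
      fix u v assume "u \<in> S k" "adj u v"
      then have "v \<in> box (r+1)" using Sbox[OF that] adj_box by blast
      then show "v \<in> A" unfolding A_def using box_mono[OF rN] by blast
    qed
    have gg': "\<forall>v\<in>A. h v + \<Delta> = h v + \<Delta>" by simp
    note sw = swap_bound[OF finA gtm[folded A_def] gsp[folded A_def] gg' SA Sv Sn]
    define E1 where "E1 = {(u,v). u \<in> A \<and> v \<in> A \<and> adj u v \<and> u \<in> S k \<and> v \<notin> S k \<and> sp v = 1 \<and> tm v = -1}"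
    define E2 where "E2 = {(u,v). u \<in> A \<and> v \<in> A \<and> adj u v \<and> v \<in> S k \<and> u \<notin> S k \<and> sp u = 1 \<and> tm u = -1}"
    have finR: "finite (R k)" using RW WC finC by (meson finite_subset)
    have "E1 \<subseteq> {(u,v). u \<in> R k \<and> adj u v}"
      unfolding E1_def using bnd DC by blast
    then have e1: "card E1 \<le> 4 * card (R k)"
      by (rule card_nb1[OF finR])
    have "E2 \<subseteq> {(u,v). v \<in> R k \<and> adj u v}"
      unfolding E2_def using bnd DC adj_sym by blast
    then have e2: "card E2 \<le> 4 * card (R k)"
      by (rule card_nb2[OF finR])
    have "card (C \<inter> box q) \<le> card (S k)"
      by (rule card_mono) (use SC[of k] finC finite_subset[OF SC[of k] finC] S_def in auto)
    then have "\<Delta> * real (card (C \<inter> box q)) \<le> \<Delta> * real (card (S k))"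
      using assms(4) by (simp add: mult_left_mono)
    also have "\<dots> \<le> real (card E1) + real (card E2)" using sw unfolding E1_def E2_def .
    also have "\<dots> \<le> 8 * real (card (R k))" using e1 e2 by linarith
    finally show ?thesis .
  qed
  have disj: "R i \<inter> R j = {}" if "i \<noteq> j" for i j
  proof -
    have "R i \<inter> R j = {}" if "i < j" for i j using that RW unfolding R_def by blast
    then show ?thesis using \<open>i \<noteq> j\<close> by (metis inf_commute nat_neq_iff)
  qed
  have Rsub: "(\<Union>k\<in>{..<m}. R k) \<subseteq> C \<inter> (box r - box q)"
  proof
    fix u assume "u \<in> (\<Union>k\<in>{..<m}. R k)"
    then obtain k where k: "k < m" "u \<in> R k" by blast
    then have "u \<in> S k" "u \<notin> box q" using RW unfolding S_def R_def by auto
    then show "u \<in> C \<inter> (box r - box q)" using Sbox[OF k(1)] SC by blast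
  qed
  have finR: "finite (R k)" for k using RW WC finC by (meson finite_subset)
  have "real m * (\<Delta> * real (card (C \<inter> box q))) = (\<Sum>k<m. \<Delta> * real (card (C \<inter> box q)))" by simp
  also have "\<dots> \<le> (\<Sum>k<m. 8 * real (card (R k)))" by (rule sum_mono) (use step in simp)
  also have "\<dots> = 8 * real (\<Sum>k<m. card (R k))" by (simp add: sum_distrib_left)
  also have "(\<Sum>k<m. card (R k)) = card (\<Union>k\<in>{..<m}. R k)"
    by (rule card_UN_disjoint[symmetric]) (use finR disj in auto)
  also have "card (\<Union>k\<in>{..<m}. R k) \<le> card (C \<inter> (box r - box q))"
    by (rule card_mono) (use Rsub finC in auto)
  finally have main: "real m * (\<Delta> * real (card (C \<inter> box q))) \<le> 8 * real (card (C \<inter> (box r - box q)))"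
    by simp
  have Km: "K \<le> real m" unfolding m_def using assms(3) by linarith
  have nn: "0 \<le> \<Delta> * real (card (C \<inter> box q))" using assms(4) by simp
  have "K * (\<Delta> * real (card (C \<inter> box q))) \<le> real m * (\<Delta> * real (card (C \<inter> box q)))"
    by (rule mult_right_mono[OF Km nn])
  moreover have "8 * real (card (C \<inter> (box r - box q))) < K * (\<Delta> * real (card (C \<inter> box q)))"
  proof -
    have "8 * real (card (C \<inter> (box r - box q))) / K < \<Delta> * real (card (C \<inter> box q))"
      using Hb by (simp add: mult.commute)
    then have "8 * real (card (C \<inter> (box r - box q))) < (\<Delta> * real (card (C \<inter> box q))) * K"
      using pos_divide_less_eq[OF assms(3)] by blast
    then show ?thesis by (simp only: mult.commute)
  qed
  ultimately show False using main by linarith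
qed

end
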